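(* Let $G$ be a finite group. The poset $\widetilde\Pi(G)$ is isomorphic to $C_2$ if and only if, for some prime $p$, either $G$ is a cyclic group of order $p$, or $G$ is an elementary abelian $p$-group, or $G$ has a subgroup isomorphic to $\mathrm{Heis}(\mathbb{Z}_p)$ and $\exp(G)=p$.
   Context: For a finite group $G$ and a subgroup $H\le G$, let $\pi_e(H)=\{o(x)\mid x\in H\}$. Let $\mathcal{L}(G)$ be the set of subgroups of $G$; define $H_1\equiv H_2$ iff $\pi_e(H_1)=\pi_e(H_2)$, with class $[H]$. The poset $\widetilde\Pi(G)$ is $\mathcal{L}(G)/\!\equiv$ ordered by $[H_1]\lesssim[H_2]$ iff $\pi_e(H_1)\subseteq\pi_e(H_2)$. $C_2$ denotes the chain with two elements. $\exp(G)$ is the exponent of $G$, the least positive integer $m$ with $g^m=e$ for all $g\in G$. For an odd prime $p$, $\mathrm{Heis}(\mathbb{Z}_p)$ denotes the group of upper unitriangular $3\times 3$ matrices over $\mathbb{Z}_p$ (the unique, up to isomorphism, nonabelian group of order $p^3$ and exponent $p$). *)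

theory Defs
  imports "HOL-Algebra.Algebra"
begin

(* pi_e(H) = set of element orders of elements of H (orders computed in G,
   which coincide with orders computed in the subgroup H) *)
definition pi_e :: "('a, 'b) monoid_scheme \<Rightarrow> 'a set \<Rightarrow> nat set" where
  "pi_e G H = {group.ord G x | x. x \<in> H}"

definition subgroups :: "('a, 'b) monoid_scheme \<Rightarrow> 'a set set" where
  "subgroups G = {H. subgroup H G}"

definition pi_equiv :: "('a, 'b) monoid_scheme \<Rightarrow> 'a set \<Rightarrow> 'a set \<Rightarrow> bool" where
  "pi_equiv G K1 K2 \<longleftrightarrow> pi_e G K1 = pi_e G K2"

definition pi_class :: "('a, 'b) monoid_scheme \<Rightarrow> 'a set \<Rightarrow> 'a set set" where
  "pi_class G H = {K \<in> subgroups G. pi_equiv G K H}"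

definition PiTilde :: "('a, 'b) monoid_scheme \<Rightarrow> 'a set set set" where
  "PiTilde G = pi_class G ` subgroups G"

definition PiTilde_le :: "('a, 'b) monoid_scheme \<Rightarrow> 'a set set \<Rightarrow> 'a set set \<Rightarrow> bool" where
  "PiTilde_le G A B \<longleftrightarrow>
     (\<exists>K1 K2. K1 \<in> subgroups G \<and> K2 \<in> subgroups G \<and> A = pi_class G K1 \<and> B = pi_class G K2
             \<and> pi_e G K1 \<subseteq> pi_e G K2)"

(* poset isomorphism of (PiTilde G, PiTilde_le G) with the two-element chain C_2,
   modelled as bool with False < True *)
definition PiTilde_iso_C2 :: "('a, 'b) monoid_scheme \<Rightarrow> bool" where
  "PiTilde_iso_C2 G \<longleftrightarrow>
     (\<exists>f :: 'a set set \<Rightarrow> bool. bij_betw f (PiTilde G) (UNIV :: bool set) \<and>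
        (\<forall>A\<in>PiTilde G. \<forall>B\<in>PiTilde G. PiTilde_le G A B \<longleftrightarrow> f A \<le> f B))"

definition group_exponent :: "('a, 'b) monoid_scheme \<Rightarrow> nat" where
  "group_exponent G = (LEAST m. m > 0 \<and> (\<forall>g\<in>carrier G. g [^]\<^bsub>G\<^esub> m = \<one>\<^bsub>G\<^esub>))"

definition elementary_abelian :: "nat \<Rightarrow> ('a, 'b) monoid_scheme \<Rightarrow> bool" where
  "elementary_abelian p G \<longleftrightarrow> comm_group G \<and>
     (\<exists>n\<ge>1. order G = p ^ n) \<and> (\<forall>g\<in>carrier G. g [^]\<^bsub>G\<^esub> p = \<one>\<^bsub>G\<^esub>)"

(* Heis(Z_p): upper unitriangular 3x3 matrices [[1,a,c],[0,1,b],[0,0,1]] over Z_p,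
   encoded by the triple (a,b,c) with entries in {0..<p}; matrix multiplication gives
   (a,b,c)(a',b',c') = (a+a', b+b', c+c'+a*b') mod p *)
definition Heis :: "nat \<Rightarrow> (nat \<times> nat \<times> nat) monoid" where
  "Heis p = \<lparr> carrier = {(a, b, c). a < p \<and> b < p \<and> c < p},
             monoid.mult = (\<lambda>(a, b, c) (a', b', c').
                       ((a + a') mod p, (b + b') mod p, (c + c' + a * b') mod p)),
             monoid.one = (0, 0, 0) \<rparr>"

end

theory Submission
  imports Defs
begin



context group begin

definition Ep :: "nat \<Rightarrow> bool" where
  "Ep p \<longleftrightarrow> carrier G \<noteq> {\<one>} \<and> (\<forall>x\<in>carrier G. x \<noteq> \<one> \<longrightarrow> ord x = p)"

lemma pi_class_self: "H \<in> subgroups G \<Longrightarrow> H \<in> pi_class G H"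
  by (simp add: pi_class_def pi_equiv_def)

lemma pi_class_eq: "H1 \<in> subgroups G \<Longrightarrow> H2 \<in> subgroups G \<Longrightarrow>
   pi_class G H1 = pi_class G H2 \<longleftrightarrow> pi_e G H1 = pi_e G H2"
  by (metis (mono_tags, lifting) mem_Collect_eq pi_class_def pi_class_self pi_equiv_def subsetI subset_antisym)

lemma pi_le_iff: "H1 \<in> subgroups G \<Longrightarrow> H2 \<in> subgroups G \<Longrightarrow>
   PiTilde_le G (pi_class G H1) (pi_class G H2) \<longleftrightarrow> pi_e G H1 \<subseteq> pi_e G H2"
  unfolding PiTilde_le_def using pi_class_eq by metis

lemma pi_e_triv: "pi_e G {\<one>} = {1}"
  by (auto simp: pi_e_def)

lemma triv_in: "{\<one>} \<in> subgroups G"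
  by (simp add: subgroups_def triv_subgroup)

lemma carrier_in: "carrier G \<in> subgroups G"
  by (simp add: subgroups_def subgroup_self)

lemma ord_in_gen:
  assumes x: "x \<in> carrier G" and z: "z \<in> generate G {x}"
  shows "ord z dvd ord x"
proof -
  obtain k :: int where zk: "z = x [^] k" using z generate_pow[OF x] by auto
  have "z [^] (ord x) = z [^] int (ord x)" by (simp add: int_pow_int)
  also have "\<dots> = x [^] (k * int (ord x))" using zk int_pow_pow[OF x] by simp
  also have "\<dots> = \<one>" using int_pow_eq_id[OF x] by simp
  finally show ?thesis using pow_eq_id zk x by (metis int_pow_closed)
qed

lemma gen_in: "x \<in> carrier G \<Longrightarrow> generate G {x} \<in> subgroups G"
  by (simp add: subgroups_def generate_is_subgroup)

lemma x_in_gen: "x \<in> carrier G \<Longrightarrow> x \<in> generate G {x}"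
  by (simp add: generate.incl)


lemma iso_C2_imp:
  assumes fin: "finite (carrier G)" and iso: "PiTilde_iso_C2 G"
  shows "\<exists>p. Factorial_Ring.prime p \<and> Ep p"
proof -
  obtain f where bij: "bij_betw f (PiTilde G) (UNIV :: bool set)"
    using iso unfolding PiTilde_iso_C2_def by blast
  have card2: "card (PiTilde G) = 2"
    using bij_betw_same_card[OF bij] by simp
  have fin2: "finite (PiTilde G)" using card2 card.infinite by fastforce
  have three: False if "A \<in> PiTilde G" "B \<in> PiTilde G" "C \<in> PiTilde G"
     "A \<noteq> B" "A \<noteq> C" "B \<noteq> C" for A B C
  proof -
    have "{A,B,C} \<subseteq> PiTilde G" using that by auto
    hence "card {A,B,C} \<le> 2" using card_mono[OF fin2] card2 by metis
    thus False using that by auto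
  qed
  have ntriv: "carrier G \<noteq> {\<one>}"
  proof
    assume c1: "carrier G = {\<one>}"
    have "subgroups G = {{\<one>}}"
    proof -
      have "H = {\<one>}" if "subgroup H G" for H
        using c1 subgroup.subset[OF that] subgroup.one_closed[OF that] by blast
      thus ?thesis unfolding subgroups_def using triv_subgroup by blast
    qed
    hence "PiTilde G = {pi_class G {\<one>}}" by (simp add: PiTilde_def)
    thus False using card2 by simp
  qed
  have P: "pi_e G (generate G {x}) = pi_e G (carrier G)" if x: "x \<in> carrier G" "x \<noteq> \<one>" for x
  proof (rule ccontr)
    assume ne: "pi_e G (generate G {x}) \<noteq> pi_e G (carrier G)"
    have o1: "ord x \<noteq> 1" using ord_eq_1 x by blast
    have a: "ord x \<in> pi_e G (generate G {x})" using x_in_gen[OF x(1)] by (auto simp: pi_e_def)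
    have b: "ord x \<in> pi_e G (carrier G)" using x by (auto simp: pi_e_def)
    show False
      apply (rule three[of "pi_class G {\<one>}" "pi_class G (generate G {x})" "pi_class G (carrier G)"])
      using triv_in gen_in[OF x(1)] carrier_in ne a b o1 pi_e_triv
      by (auto simp: PiTilde_def pi_class_eq)
  qed
  obtain x where x: "x \<in> carrier G" "x \<noteq> \<one>" using ntriv by blast
  define n where "n = ord x"
  have same: "ord y = n" if y: "y \<in> carrier G" "y \<noteq> \<one>" for y
  proof -
    have "ord y \<in> pi_e G (generate G {x})" using P[OF x] y by (auto simp: pi_e_def)
    then obtain z where "z \<in> generate G {x}" "ord y = ord z" by (auto simp: pi_e_def)
    hence d1: "ord y dvd ord x" using ord_in_gen[OF x(1)] by simp
    have "ord x \<in> pi_e G (generate G {y})" using P[OF y] x by (auto simp: pi_e_def)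
    then obtain z where "z \<in> generate G {y}" "ord x = ord z" by (auto simp: pi_e_def)
    hence d2: "ord x dvd ord y" using ord_in_gen[OF y(1)] by simp
    show ?thesis using d1 d2 n_def by (simp add: dvd_antisym)
  qed
  have n1: "n \<noteq> 1" using ord_eq_1[OF x(1)] x(2) n_def by simp
  have n0: "n \<ge> 1" using ord_ge_1[OF fin x(1)] n_def by simp
  obtain q where q: "Factorial_Ring.prime q" "q dvd n" using n1 prime_factor_nat by blast
  have q0: "q \<noteq> 0" using q by auto
  have qd: "n div q dvd n" using q by (metis dvd_def dvd_div_mult_self mult.commute)
  have qn: "q \<le> n" using q(2) n0 by (simp add: dvd_imp_le)
  have nq0: "n div q \<noteq> 0" using qn q0 by (simp add: div_greater_zero_iff)
  have nn: "n = (n div q) * q" using q(2) by simp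
  have "n div (n div q) = q" using nq0 nn by (metis nonzero_mult_div_cancel_left)
  hence oy: "ord (x [^] (n div q)) = q"
    using ord_pow[OF x(1) _ nq0] qd n_def by simp
  have "x [^] (n div q) \<noteq> \<one>" using oy q by (metis ord_id not_prime_1)
  hence "q = n" using same[of "x [^] (n div q)"] oy x by simp
  thus ?thesis using q ntriv same unfolding Ep_def by blast
qed

lemma Ep_imp_iso_C2:
  assumes p: "Factorial_Ring.prime p" and E: "Ep p"
  shows "PiTilde_iso_C2 G"
proof -
  have ntriv: "carrier G \<noteq> {\<one>}" and ordp: "\<And>x. x \<in> carrier G \<Longrightarrow> x \<noteq> \<one> \<Longrightarrow> ord x = p"
    using E by (auto simp: Ep_def)
  have p1: "p \<noteq> 1" using p by auto
  have sub: "pi_e G H \<subseteq> {1, p}" if "H \<in> subgroups G" for H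
  proof
    fix n assume "n \<in> pi_e G H"
    then obtain y where y: "y \<in> H" "n = ord y" by (auto simp: pi_e_def)
    have "y \<in> carrier G" using y(1) that unfolding subgroups_def by (simp add: subgroup.mem_carrier)
    thus "n \<in> {1,p}" using y ordp[of y] by (cases "y = \<one>") auto
  qed
  have one: "1 \<in> pi_e G H" if "H \<in> subgroups G" for H
    using that by (auto simp: pi_e_def subgroups_def subgroup.one_closed intro!: exI[of _ \<one>])
  obtain x where x: "x \<in> carrier G" "x \<noteq> \<one>" using ntriv subgroup.one_closed subgroup_self by blast
  have pc: "pi_e G (carrier G) = {1,p}"
    using sub[OF carrier_in] one[OF carrier_in] ordp[OF x] x by (auto simp: pi_e_def)
  have two: "pi_e G H = {1} \<or> pi_e G H = {1,p}" if "H \<in> subgroups G" for H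
    using sub[OF that] one[OF that] by auto
  define f where "f = (\<lambda>A. A \<noteq> pi_class G {\<one>})"
  have fH: "f (pi_class G H) \<longleftrightarrow> pi_e G H \<noteq> {1}" if "H \<in> subgroups G" for H
    using pi_class_eq[OF that triv_in] pi_e_triv f_def by simp
  have PT: "PiTilde G = {pi_class G {\<one>}, pi_class G (carrier G)}"
  proof
    show "PiTilde G \<subseteq> {pi_class G {\<one>}, pi_class G (carrier G)}"
    proof
      fix A assume "A \<in> PiTilde G"
      then obtain H where H: "H \<in> subgroups G" "A = pi_class G H" by (auto simp: PiTilde_def)
      show "A \<in> {pi_class G {\<one>}, pi_class G (carrier G)}"
      proof (cases "pi_e G H = {1}")
        case True
        then show ?thesis using pi_class_eq[OF H(1) triv_in] pi_e_triv H(2) by simp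
      next
        case False
        then show ?thesis using two[OF H(1)] pi_class_eq[OF H(1) carrier_in] pc H(2) by simp
      qed
    qed
    show "{pi_class G {\<one>}, pi_class G (carrier G)} \<subseteq> PiTilde G"
      unfolding PiTilde_def using triv_in carrier_in by auto
  qed
  have dist: "pi_class G {\<one>} \<noteq> pi_class G (carrier G)"
    using pi_class_eq[OF triv_in carrier_in] pi_e_triv pc p1 by auto
  have "bij_betw f (PiTilde G) (UNIV :: bool set)"
    unfolding bij_betw_def inj_on_def PT f_def using dist by auto
  moreover have "\<forall>A\<in>PiTilde G. \<forall>B\<in>PiTilde G. PiTilde_le G A B \<longleftrightarrow> f A \<le> f B"
  proof (intro ballI)
    fix A B assume "A \<in> PiTilde G" "B \<in> PiTilde G"
    then obtain H1 H2 where h: "H1 \<in> subgroups G" "H2 \<in> subgroups G"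
      "A = pi_class G H1" "B = pi_class G H2" by (auto simp: PiTilde_def)
    show "PiTilde_le G A B \<longleftrightarrow> f A \<le> f B"
      using pi_le_iff[OF h(1,2)] fH[OF h(1)] fH[OF h(2)] two[OF h(1)] two[OF h(2)] h p1
      by (auto simp: le_bool_def)
  qed
  ultimately show ?thesis unfolding PiTilde_iso_C2_def by blast
qed

end




context group begin

lemma rhs_imp_Ep:
  assumes fin: "finite (carrier G)" and p: "Factorial_Ring.prime p"
    and R: "(cyclic_group G \<and> order G = p) \<or> elementary_abelian p G
        \<or> ((\<exists>H. subgroup H G \<and> G\<lparr>carrier := H\<rparr> \<cong> Heis p) \<and> group_exponent G = p)"
  shows "Ep p"
proof -
  have p1: "p > 1" using p prime_gt_1_nat by blast
  have ordp: "ord x = p" if "x \<in> carrier G" "x \<noteq> \<one>" "x [^] p = \<one>" for x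
  proof -
    have "ord x dvd p" using that pow_eq_id by blast
    moreover have "ord x \<noteq> 1" using ord_eq_1 that by blast
    ultimately show ?thesis using p by (metis prime_nat_iff)
  qed
  have ntriv: "carrier G \<noteq> {\<one>}" if "order G > 1"
    using that unfolding order_def by auto
  consider (cyc) "cyclic_group G" "order G = p" | (ea) "elementary_abelian p G"
    | (heis) "group_exponent G = p" using R by blast
  then show ?thesis
  proof cases
    case cyc
    have "x [^] p = \<one>" if "x \<in> carrier G" for x using pow_order_eq_1[OF that] cyc by simp
    then show ?thesis using ordp ntriv cyc p1 unfolding Ep_def by simp
  next
    case ea
    then obtain n where n: "n \<ge> 1" "order G = p ^ n" and pw: "\<forall>g\<in>carrier G. g [^] p = \<one>"
      unfolding elementary_abelian_def by blast
    have "order G > 1" using n p1 by (metis One_nat_def Suc_le_eq one_less_power)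
    then show ?thesis using ordp ntriv pw unfolding Ep_def by simp
  next
    case heis
    let ?P = "\<lambda>m::nat. m > 0 \<and> (\<forall>g\<in>carrier G. g [^] m = \<one>)"
    have wit: "?P (order G)" using pow_order_eq_1 fin order_gt_0_iff_finite by blast
    have Pp: "?P p" using LeastI[of ?P, OF wit] heis unfolding group_exponent_def by simp
    have "carrier G \<noteq> {\<one>}"
    proof
      assume "carrier G = {\<one>}"
      hence "?P 1" by simp
      hence "group_exponent G \<le> 1" unfolding group_exponent_def by (rule Least_le)
      thus False using heis p1 by simp
    qed
    then show ?thesis using ordp Pp unfolding Ep_def by simp
  qed
qed

lemma Ep_exponent:
  assumes p: "Factorial_Ring.prime p" and E: "Ep p"
  shows "group_exponent G = p"
proof -
  have ntriv: "carrier G \<noteq> {\<one>}" and ordp: "\<And>x. x \<in> carrier G \<Longrightarrow> x \<noteq> \<one> \<Longrightarrow> ord x = p"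
    using E by (auto simp: Ep_def)
  have pw: "x [^] p = \<one>" if "x \<in> carrier G" for x
    using ordp[OF that] that by (cases "x = \<one>") auto
  obtain x where x: "x \<in> carrier G" "x \<noteq> \<one>" using ntriv subgroup.one_closed subgroup_self by blast
  have p0: "p > 0" using p prime_gt_0_nat by blast
  show ?thesis unfolding group_exponent_def
  proof (rule Least_equality)
    show "0 < p \<and> (\<forall>g\<in>carrier G. g [^] p = \<one>)" using pw p0 by simp
    fix m :: nat assume m: "0 < m \<and> (\<forall>g\<in>carrier G. g [^] m = \<one>)"
    hence "x [^] m = \<one>" using x(1) by blast
    hence "p dvd m" using pow_eq_id[OF x(1)] ordp[OF x] by simp
    thus "p \<le> m" using m by (simp add: dvd_imp_le)
  qed
qed

lemma Ep_pgroup: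
  assumes fin: "finite (carrier G)" and p: "Factorial_Ring.prime p" and E: "Ep p"
  shows "\<exists>n\<ge>1. order G = p ^ n"
proof -
  have ntriv: "carrier G \<noteq> {\<one>}" and ordp: "\<And>x. x \<in> carrier G \<Longrightarrow> x \<noteq> \<one> \<Longrightarrow> ord x = p"
    using E by (auto simp: Ep_def)
  have o0: "order G > 0" using fin order_gt_0_iff_finite by blast
  have onlyp: "q = p" if q: "Factorial_Ring.prime q" "q dvd order G" for q
  proof -
    define a where "a = multiplicity q (order G)"
    define m where "m = order G div q ^ a"
    have "q ^ 1 dvd order G" using q by simp
    hence a1: "a \<ge> 1" unfolding a_def
      using multiplicity_geI[of "order G" q 1] o0 q(1) prime_gt_1_nat[OF q(1)] by simp
    have dv: "q ^ a dvd order G" unfolding a_def by (rule multiplicity_dvd)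
    have om: "order G = q ^ a * m" using dv unfolding m_def by simp
    obtain H where H: "subgroup H G" "card H = q ^ a"
      using sylow_thm[OF q(1) is_group om fin] by blast
    have "card H > 1" using H(2) a1 q(1) by (metis one_less_power prime_gt_1_nat less_le_trans zero_less_one One_nat_def Suc_le_eq)
    have "\<not> H \<subseteq> {\<one>}"
    proof
      assume "H \<subseteq> {\<one>}" hence "card H \<le> 1" using card_mono[of "{\<one>}" H] by simp
      thus False using \<open>card H > 1\<close> by simp
    qed
    then obtain y where y: "y \<in> H" "y \<noteq> \<one>" by blast
    have yc: "y \<in> carrier G" using subgroup.mem_carrier[OF H(1) y(1)] .
    have "y [^]\<^bsub>G\<lparr>carrier := H\<rparr>\<^esub> order (G\<lparr>carrier := H\<rparr>) = \<one>\<^bsub>G\<lparr>carrier := H\<rparr>\<^esub>"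
      using group.pow_order_eq_1[OF subgroup_imp_group[OF H(1)]] y(1) by simp
    hence "y [^] card H = \<one>" by (simp add: order_def flip: nat_pow_consistent)
    hence "ord y dvd card H" using pow_eq_id[OF yc] by simp
    hence "p dvd q ^ a" using ordp[OF yc y(2)] H(2) by simp
    thus "q = p" using p q(1) by (metis prime_dvd_power_nat prime_nat_iff prime_gt_1_nat nat_neq_iff)
  qed
  define k where "k = multiplicity p (order G)"
  define m where "m = order G div p ^ k"
  have dv: "p ^ k dvd order G" unfolding k_def by (rule multiplicity_dvd)
  have om: "order G = p ^ k * m" using dv unfolding m_def by simp
  have m1: "m = 1"
  proof (rule ccontr)
    assume "m \<noteq> 1"
    then obtain q where q: "Factorial_Ring.prime q" "q dvd m" using prime_factor_nat by blast
    have "q dvd order G" using q(2) om by (metis dvd_mult)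
    hence "q = p" using onlyp[OF q(1)] by simp
    hence "p ^ k * p dvd p ^ k * m" using q(2) by (intro mult_dvd_mono) simp_all
    hence "p ^ Suc k dvd order G" using om by (simp add: mult.commute)
    hence "Suc k \<le> multiplicity p (order G)"
      using multiplicity_geI[of "order G" p "Suc k"] o0 prime_gt_1_nat[OF p] by simp
    hence "Suc k \<le> k" unfolding k_def .
    thus False by simp
  qed
  have "k \<ge> 1"
  proof (rule ccontr)
    assume "\<not> k \<ge> 1" hence "order G = 1" using om m1 by simp
    then obtain z where "carrier G = {z}" unfolding order_def by (rule card_1_singletonE)
    thus False using ntriv one_closed by auto
  qed
  thus ?thesis using om m1 by auto
qed

end




context group begin

lemma inv_cancel_l': "x \<in> carrier G \<Longrightarrow> y \<in> carrier G \<Longrightarrow> x \<otimes> (inv x \<otimes> y) = y"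
  by (simp add: m_assoc[symmetric])

lemma inv_cancel_l'': "x \<in> carrier G \<Longrightarrow> y \<in> carrier G \<Longrightarrow> inv x \<otimes> (x \<otimes> y) = y"
  by (simp add: m_assoc[symmetric])

lemma Ep_comm_ea:
  assumes fin: "finite (carrier G)" and p: "Factorial_Ring.prime p" and E: "Ep p"
    and c: "comm_group G"
  shows "elementary_abelian p G"
proof -
  have ordp: "\<And>x. x \<in> carrier G \<Longrightarrow> x \<noteq> \<one> \<Longrightarrow> ord x = p"
    using E by (auto simp: Ep_def)
  have pw: "x [^] p = \<one>" if "x \<in> carrier G" for x
    using ordp[OF that] that by (cases "x = \<one>") auto
  show ?thesis unfolding elementary_abelian_def using c pw Ep_pgroup[OF fin p E] by blast
qed

definition Zc :: "'a set" where "Zc = {z \<in> carrier G. \<forall>g\<in>carrier G. z \<otimes> g = g \<otimes> z}"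

lemma Zc_subgroup: "subgroup Zc G"
proof (rule subgroupI)
  show "Zc \<subseteq> carrier G" by (auto simp: Zc_def)
  show "Zc \<noteq> {}" using one_closed by (auto simp: Zc_def intro!: exI[of _ \<one>])
  fix a b assume a: "a \<in> Zc"
  hence ac: "a \<in> carrier G" and ca: "\<And>g. g \<in> carrier G \<Longrightarrow> a \<otimes> g = g \<otimes> a" by (auto simp: Zc_def)
  have "inv a \<otimes> g = g \<otimes> inv a" if g: "g \<in> carrier G" for g
  proof -
    have "inv a \<otimes> g = inv a \<otimes> (g \<otimes> a) \<otimes> inv a" using ac g by (simp add: m_assoc)
    also have "\<dots> = inv a \<otimes> (a \<otimes> g) \<otimes> inv a" using ca g by simp
    also have "\<dots> = g \<otimes> inv a" using ac g by (simp add: inv_cancel_l'')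
    finally show ?thesis .
  qed
  thus "inv a \<in> Zc" using ac by (auto simp: Zc_def)
  assume b: "b \<in> Zc"
  hence bc: "b \<in> carrier G" and cb: "\<And>g. g \<in> carrier G \<Longrightarrow> b \<otimes> g = g \<otimes> b" by (auto simp: Zc_def)
  have "a \<otimes> b \<otimes> g = g \<otimes> (a \<otimes> b)" if g: "g \<in> carrier G" for g
  proof -
    have "a \<otimes> b \<otimes> g = a \<otimes> (g \<otimes> b)" using ac bc g cb by (simp add: m_assoc)
    also have "\<dots> = (a \<otimes> g) \<otimes> b" using ac bc g by (simp add: m_assoc)
    also have "\<dots> = g \<otimes> (a \<otimes> b)" using ac bc g ca by (simp add: m_assoc)
    finally show ?thesis .
  qed
  thus "a \<otimes> b \<in> Zc" using ac bc by (auto simp: Zc_def)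
qed

lemma Zc_coset_eq: "a \<in> carrier G \<Longrightarrow> Zc #> a = Zc \<longleftrightarrow> a \<in> Zc"
proof
  assume a: "a \<in> carrier G" "Zc #> a = Zc"
  have "\<one> \<otimes> a \<in> Zc #> a" using Zc_subgroup subgroup.one_closed unfolding r_coset_def by blast
  thus "a \<in> Zc" using a by simp
next
  assume "a \<in> carrier G" "a \<in> Zc"
  thus "Zc #> a = Zc" using coset_join2 Zc_subgroup by blast
qed

lemma conj_coset:
  assumes a: "a \<in> carrier G" and g: "g \<in> carrier G"
  shows "g <# (Zc #> a) #> inv g = Zc #> (g \<otimes> a \<otimes> inv g)"
proof -
  have key: "g \<otimes> (z \<otimes> a) \<otimes> inv g = z \<otimes> (g \<otimes> a \<otimes> inv g)" if z: "z \<in> Zc" for z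
  proof -
    have zc: "z \<in> carrier G" and cz: "g \<otimes> z = z \<otimes> g" using z g by (auto simp: Zc_def)
    have "g \<otimes> (z \<otimes> a) \<otimes> inv g = (g \<otimes> z) \<otimes> a \<otimes> inv g" using zc a g by (simp add: m_assoc)
    also have "\<dots> = z \<otimes> (g \<otimes> a \<otimes> inv g)" using cz zc a g by (simp add: m_assoc)
    finally show ?thesis .
  qed
  show ?thesis
    unfolding r_coset_def l_coset_def using key by auto
qed

lemma conj_central_imp:
  assumes a: "a \<in> carrier G" and g: "g \<in> carrier G" and h: "g \<otimes> a \<otimes> inv g \<in> Zc"
  shows "a \<in> Zc"
proof -
  have hc: "g \<otimes> a \<otimes> inv g \<in> carrier G" using a g by simp
  have "a = inv g \<otimes> (g \<otimes> a \<otimes> inv g) \<otimes> g" using a g by (simp add: m_assoc inv_cancel_l'')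
  also have "\<dots> = inv g \<otimes> (g \<otimes> (g \<otimes> a \<otimes> inv g))" using h g hc by (simp add: Zc_def m_assoc)
  also have "\<dots> = g \<otimes> a \<otimes> inv g" using g hc by (simp add: inv_cancel_l'')
  finally show ?thesis using h by simp
qed


lemma exists_good:
  assumes fin: "finite (carrier G)" and p: "Factorial_Ring.prime p" and n: "order G = p ^ n"
    and nc: "x \<in> carrier G" "y \<in> carrier G" "x \<otimes> y \<noteq> y \<otimes> x"
  shows "\<exists>a\<in>carrier G. a \<notin> Zc \<and> (\<forall>h\<in>carrier G. h \<otimes> a \<otimes> inv h \<in> Zc #> a)"
proof (rule ccontr)
  assume H: "\<not> ?thesis"
  define act where "act = (\<lambda>g. \<lambda>H \<in> {H. H \<subseteq> carrier G}. g <# H #> inv g)"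
  define E where "E = {H. H \<subseteq> carrier G}"
  interpret A: group_action G E act
    unfolding act_def E_def by (rule action_by_conjugation_on_power_set)
  have Zsub: "Zc \<subseteq> carrier G" by (auto simp: Zc_def)
  have ZnG: "Zc \<noteq> carrier G" using nc by (auto simp: Zc_def)
  define Xs where "Xs = rcosets Zc"
  have lag: "card Xs * card Zc = order G" unfolding Xs_def by (rule lagrange[OF Zc_subgroup])
  have finZ: "finite Zc" using fin Zsub finite_subset by blast
  have cZ: "card Zc < order G" unfolding order_def
    using psubset_card_mono[OF fin, of Zc] Zsub ZnG by (simp add: psubsetI)
  have Xs1: "card Xs \<noteq> 1"
  proof
    assume "card Xs = 1" thus False using lag cZ by simp
  qed
  have "card Xs dvd p ^ n" using lag n by (metis dvd_triv_left)
  then obtain i where "card Xs = p ^ i" using divides_primepow_nat[OF p] by blast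
  hence pX: "p dvd card Xs" using Xs1 by (cases i) auto
  have ZX: "Zc \<in> Xs" unfolding Xs_def RCOSETS_def using coset_mult_one[OF Zsub] one_closed by force
  have finX: "finite Xs" unfolding Xs_def using fin by (simp add: RCOSETS_def)
  define Xr where "Xr = Xs - {Zc}"
  have cX': "card Xr = card Xs - 1" unfolding Xr_def using ZX finX by simp
  have XE: "Xs \<subseteq> E"
  proof
    fix S assume "S \<in> Xs"
    then obtain a where a: "a \<in> carrier G" "S = Zc #> a" unfolding Xs_def RCOSETS_def by blast
    show "S \<in> E" using r_coset_subset_G[OF Zsub a(1)] a(2) E_def by simp
  qed
  have phiS: "act g (Zc #> a) = Zc #> (g \<otimes> a \<otimes> inv g)" if "a \<in> carrier G" "g \<in> carrier G" for a g
    using that conj_coset r_coset_subset_G[OF Zsub] unfolding act_def by simp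
  have orb_sub: "orbit G act S \<subseteq> Xr" if S: "S \<in> Xr" for S
  proof
    fix T assume "T \<in> orbit G act S"
    then obtain g where g: "g \<in> carrier G" "T = act g S" unfolding orbit_def by blast
    obtain a where a: "a \<in> carrier G" "S = Zc #> a" using S unfolding Xr_def Xs_def RCOSETS_def by blast
    have T: "T = Zc #> (g \<otimes> a \<otimes> inv g)" using g a phiS by simp
    have "T \<noteq> Zc"
    proof
      assume "T = Zc"
      hence "g \<otimes> a \<otimes> inv g \<in> Zc" using T Zc_coset_eq a g by simp
      hence "a \<in> Zc" using conj_central_imp a g by blast
      hence "S = Zc" using a Zc_coset_eq by simp
      thus False using S unfolding Xr_def by simp
    qed
    moreover have "T \<in> Xs" unfolding Xs_def RCOSETS_def using T a g by auto
    ultimately show "T \<in> Xr" unfolding Xr_def by simp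
  qed
  have orb_dvd: "p dvd card (orbit G act S)" if S: "S \<in> Xr" for S
  proof -
    have SE: "S \<in> E" using S XE unfolding Xr_def by auto
    have "card (orbit G act S) dvd p ^ n"
      using A.orbit_stabilizer_theorem[OF SE] n by (metis dvd_triv_left)
    then obtain j where j: "card (orbit G act S) = p ^ j" using divides_primepow_nat[OF p] by blast
    show ?thesis
    proof (cases j)
      case (Suc k) thus ?thesis using j by simp
    next
      case 0
      hence c1: "card (orbit G act S) = 1" using j by simp
      have Sin: "S \<in> orbit G act S" using A.orbit_refl[OF SE] .
      hence orbS: "orbit G act S = {S}" using c1 by (metis card_1_singletonE singletonD)
      obtain a where a: "a \<in> carrier G" "S = Zc #> a" using S unfolding Xr_def Xs_def RCOSETS_def by blast
      have anZ: "a \<notin> Zc" using a S Zc_coset_eq unfolding Xr_def by auto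
      have "h \<otimes> a \<otimes> inv h \<in> Zc #> a" if h: "h \<in> carrier G" for h
      proof -
        have "act h S \<in> orbit G act S" using h unfolding orbit_def by blast
        hence "act h S = S" using orbS by simp
        hence eq: "Zc #> (h \<otimes> a \<otimes> inv h) = Zc #> a" using phiS a h by simp
        have "\<one> \<otimes> (h \<otimes> a \<otimes> inv h) \<in> Zc #> (h \<otimes> a \<otimes> inv h)"
          using Zc_subgroup subgroup.one_closed unfolding r_coset_def by blast
        thus ?thesis using eq h a by simp
      qed
      thus ?thesis using H a anZ by blast
    qed
  qed
  have disj: "orbit G act S = orbit G act T \<or> orbit G act S \<inter> orbit G act T = {}"
    if S: "S \<in> Xr" and T: "T \<in> Xr" for S T
  proof (cases "orbit G act S \<inter> orbit G act T = {}")
    case False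
    then obtain U where U: "U \<in> orbit G act S" "U \<in> orbit G act T" by blast
    have inE: "V \<in> E" if "V \<in> orbit G act S \<or> V \<in> orbit G act T \<or> V \<in> Xr" for V
      using that orb_sub[OF S] orb_sub[OF T] XE unfolding Xr_def by blast
    have SE: "S \<in> E" and TE: "T \<in> E" and UE: "U \<in> E" using inE S T U by auto
    have "orbit G act S \<subseteq> orbit G act T"
    proof
      fix V assume V: "V \<in> orbit G act S"
      have VE: "V \<in> E" using inE V by blast
      have "S \<in> orbit G act U" using A.orbit_sym[OF SE UE U(1)] .
      hence "V \<in> orbit G act U" using A.orbit_trans[OF UE SE VE] V by blast
      thus "V \<in> orbit G act T" using A.orbit_trans[OF TE UE VE U(2)] by blast
    qed
    moreover have "orbit G act T \<subseteq> orbit G act S"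
    proof
      fix V assume V: "V \<in> orbit G act T"
      have VE: "V \<in> E" using inE V by blast
      have "T \<in> orbit G act U" using A.orbit_sym[OF TE UE U(2)] .
      hence "V \<in> orbit G act U" using A.orbit_trans[OF UE TE VE] V by blast
      thus "V \<in> orbit G act S" using A.orbit_trans[OF SE UE VE U(1)] by blast
    qed
    ultimately show ?thesis by blast
  qed simp
  have un: "\<Union> {orbit G act S | S. S \<in> Xr} = Xr"
  proof
    show "\<Union> {orbit G act S | S. S \<in> Xr} \<subseteq> Xr" using orb_sub by blast
    show "Xr \<subseteq> \<Union> {orbit G act S | S. S \<in> Xr}"
    proof
      fix S assume S: "S \<in> Xr"
      hence "S \<in> orbit G act S" using A.orbit_refl XE unfolding Xr_def by blast
      thus "S \<in> \<Union> {orbit G act S | S. S \<in> Xr}" using S by blast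
    qed
  qed
  have "p dvd card (\<Union> {orbit G act S | S. S \<in> Xr})"
  proof -
    have "finite (\<Union> {orbit G act S | S. S \<in> Xr})" using un finX Xr_def by simp
    moreover have "\<forall>c\<in>{orbit G act S | S. S \<in> Xr}. p dvd card c" using orb_dvd by blast
    moreover have "\<forall>c1\<in>{orbit G act S | S. S \<in> Xr}. \<forall>c2\<in>{orbit G act S | S. S \<in> Xr}. c1 \<noteq> c2 \<longrightarrow> c1 \<inter> c2 = {}"
      using disj by blast
    ultimately show ?thesis by (rule dvd_partition)
  qed

  hence "p dvd card Xs - 1" using un cX' by simp
  hence "p dvd 1" using pX Xs1 ZX finX
  proof -
    have "card Xs > 0" using ZX finX card_gt_0_iff by blast
    hence "card Xs - (card Xs - 1) = 1" by simp
    thus ?thesis using dvd_diff_nat[OF pX \<open>p dvd card Xs - 1\<close>] by simp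
  qed

  thus False using p by simp
qed

end




lemma Heis_carrier: "carrier (Heis p) = {(a, b, c). a < p \<and> b < p \<and> c < p}"
  by (simp add: Heis_def)

lemma Heis_mult: "(i, j, k) \<otimes>\<^bsub>Heis p\<^esub> (i', j', k') = ((i + i') mod p, (j + j') mod p, (k + k' + i * j') mod p)"
  by (simp add: Heis_def)

context group begin

lemma good_to_abc:
  assumes a: "a \<in> carrier G" "a \<notin> Zc" and h: "\<forall>h\<in>carrier G. h \<otimes> a \<otimes> inv h \<in> Zc #> a"
  shows "\<exists>b\<in>carrier G. \<exists>c\<in>carrier G. c \<noteq> \<one> \<and> (\<forall>g\<in>carrier G. c \<otimes> g = g \<otimes> c) \<and> a \<otimes> b = b \<otimes> a \<otimes> c"
proof -
  obtain b where b: "b \<in> carrier G" "a \<otimes> b \<noteq> b \<otimes> a" using a unfolding Zc_def by blast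
  have "inv b \<otimes> a \<otimes> inv (inv b) \<in> Zc #> a" using bspec[OF h, of "inv b"] b by simp
  hence "inv b \<otimes> a \<otimes> b \<in> Zc #> a" using b by simp
  then obtain z where z: "z \<in> Zc" "inv b \<otimes> a \<otimes> b = z \<otimes> a" unfolding r_coset_def by blast
  have zc: "z \<in> carrier G" and cz: "\<forall>g\<in>carrier G. z \<otimes> g = g \<otimes> z" using z by (auto simp: Zc_def)
  have "a \<otimes> b = b \<otimes> (inv b \<otimes> a \<otimes> b)" using a b by (simp add: m_assoc inv_cancel_l')
  also have "\<dots> = b \<otimes> (z \<otimes> a)" using z by simp
  also have "\<dots> = b \<otimes> a \<otimes> z" using cz a zc b by (simp add: m_assoc)
  finally have eq: "a \<otimes> b = b \<otimes> a \<otimes> z" .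
  have "z \<noteq> \<one>" using eq b a by auto
  thus ?thesis using eq b zc cz by blast
qed

lemma cpow_central:
  assumes c: "c \<in> carrier G" "\<forall>g\<in>carrier G. c \<otimes> g = g \<otimes> c" and g: "g \<in> carrier G"
  shows "c [^] (k::nat) \<otimes> g = g \<otimes> c [^] k"
proof (induction k)
  case 0 then show ?case using g by simp
next
  case (Suc k)
  have "c [^] Suc k \<otimes> g = c [^] k \<otimes> (c \<otimes> g)" using c g by (simp add: m_assoc)
  also have "\<dots> = (c [^] k \<otimes> g) \<otimes> c" using c g by (simp add: m_assoc)
  also have "\<dots> = g \<otimes> c [^] Suc k" using Suc c g by (simp add: m_assoc)
  finally show ?case .
qed

lemma ab_pow1:
  assumes a: "a \<in> carrier G" and b: "b \<in> carrier G" and c: "c \<in> carrier G"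
    and cc: "\<forall>g\<in>carrier G. c \<otimes> g = g \<otimes> c" and ab: "a \<otimes> b = b \<otimes> a \<otimes> c"
  shows "a \<otimes> b [^] (m::nat) = b [^] m \<otimes> a \<otimes> c [^] m"
proof (induction m)
  case 0 then show ?case using a by simp
next
  case (Suc m)
  have "a \<otimes> b [^] Suc m = (a \<otimes> b [^] m) \<otimes> b" using a b by (simp add: m_assoc)
  also have "\<dots> = b [^] m \<otimes> a \<otimes> (c [^] m \<otimes> b)" using Suc a b c by (simp add: m_assoc)
  also have "\<dots> = b [^] m \<otimes> (a \<otimes> b) \<otimes> c [^] m" using cpow_central[OF c cc b] a b c by (simp add: m_assoc)
  also have "\<dots> = b [^] m \<otimes> (b \<otimes> a \<otimes> c) \<otimes> c [^] m" using ab by simp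
  also have "\<dots> = b [^] Suc m \<otimes> a \<otimes> (c \<otimes> c [^] m)" using a b c by (simp add: m_assoc)
  also have "\<dots> = b [^] Suc m \<otimes> a \<otimes> c [^] Suc m" using c by (simp add: nat_pow_Suc2[symmetric])
  finally show ?case .
qed

lemma ab_pow2:
  assumes a: "a \<in> carrier G" and b: "b \<in> carrier G" and c: "c \<in> carrier G"
    and cc: "\<forall>g\<in>carrier G. c \<otimes> g = g \<otimes> c" and ab: "a \<otimes> b = b \<otimes> a \<otimes> c"
  shows "a [^] (i::nat) \<otimes> b [^] (m::nat) = b [^] m \<otimes> a [^] i \<otimes> c [^] (i * m)"
proof (induction i)
  case 0 then show ?case using b by simp
next
  case (Suc i)
  have "a [^] Suc i \<otimes> b [^] m = a [^] i \<otimes> (a \<otimes> b [^] m)" using a b by (simp add: m_assoc)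
  also have "\<dots> = a [^] i \<otimes> (b [^] m \<otimes> a \<otimes> c [^] m)" using ab_pow1[OF a b c cc ab] by simp
  also have "\<dots> = (a [^] i \<otimes> b [^] m) \<otimes> a \<otimes> c [^] m" using a b c by (simp add: m_assoc)
  also have "\<dots> = b [^] m \<otimes> a [^] i \<otimes> (c [^] (i * m) \<otimes> a) \<otimes> c [^] m" using Suc a b c by (simp add: m_assoc)
  also have "\<dots> = b [^] m \<otimes> (a [^] i \<otimes> a) \<otimes> (c [^] (i * m) \<otimes> c [^] m)"
    using cpow_central[OF c cc a] a b c by (simp add: m_assoc)
  also have "\<dots> = b [^] m \<otimes> a [^] Suc i \<otimes> c [^] (Suc i * m)" using a c by (simp add: nat_pow_mult add.commute)
  finally show ?case .
qed


lemma heis_sub: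
  assumes p: "Factorial_Ring.prime p" and pw: "\<forall>x\<in>carrier G. x [^] p = \<one>"
    and a: "a \<in> carrier G" and b: "b \<in> carrier G" and c: "c \<in> carrier G" and c1: "c \<noteq> \<one>"
    and cc: "\<forall>g\<in>carrier G. c \<otimes> g = g \<otimes> c" and ab: "a \<otimes> b = b \<otimes> a \<otimes> c"
  shows "\<exists>H. subgroup H G \<and> G\<lparr>carrier := H\<rparr> \<cong> Heis p"
proof -
  have p0: "p > 0" using p prime_gt_0_nat by blast
  define F where "F = (\<lambda>(i::nat, j::nat, k::nat). b [^] j \<otimes> a [^] i \<otimes> c [^] k)"
  have Fc: "F t \<in> carrier G" for t using a b c unfolding F_def by (cases t) auto
  have modp: "x [^] (n mod p) = x [^] n" if x: "x \<in> carrier G" for x n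
  proof -
    have "x [^] (n mod p) \<otimes> (x [^] p) [^] (n div p) = x [^] (n mod p + p * (n div p))"
      using x by (simp add: nat_pow_mult nat_pow_pow)
    also have "\<dots> = x [^] n" by simp
    finally show ?thesis using x pw by simp
  qed
  have HF: "F (i, j, k) \<otimes> F (i', j', k') = F (i + i', j + j', k + k' + i * j')" for i j k i' j' k'
  proof -
    have "F (i, j, k) \<otimes> F (i', j', k') = b [^] j \<otimes> a [^] i \<otimes> (c [^] k \<otimes> (b [^] j' \<otimes> a [^] i')) \<otimes> c [^] k'"
      unfolding F_def using a b c by (simp add: m_assoc)
    also have "\<dots> = b [^] j \<otimes> (a [^] i \<otimes> b [^] j') \<otimes> a [^] i' \<otimes> (c [^] k \<otimes> c [^] k')"
      using cpow_central[OF c cc, of "b [^] j' \<otimes> a [^] i'"] a b c by (simp add: m_assoc)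
    also have "\<dots> = b [^] j \<otimes> b [^] j' \<otimes> a [^] i \<otimes> (c [^] (i * j') \<otimes> a [^] i') \<otimes> (c [^] k \<otimes> c [^] k')"
      using ab_pow2[OF a b c cc ab] a b c by (simp add: m_assoc)
    also have "\<dots> = b [^] j \<otimes> b [^] j' \<otimes> (a [^] i \<otimes> a [^] i') \<otimes> (c [^] (i * j') \<otimes> (c [^] k \<otimes> c [^] k'))"
      using cpow_central[OF c cc, of "a [^] i'"] a b c by (simp add: m_assoc)
    also have "\<dots> = F (i + i', j + j', k + k' + i * j')"
      unfolding F_def using a b c by (simp add: nat_pow_mult add.commute add.left_commute)
    finally show ?thesis .
  qed
  have Fmod: "F (i mod p, j mod p, k mod p) = F (i, j, k)" for i j k
    unfolding F_def using modp a b c by simp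
  have Fhom: "F (s \<otimes>\<^bsub>Heis p\<^esub> t) = F s \<otimes> F t" for s t
  proof -
    obtain i j k where s: "s = (i, j, k)" by (cases s) auto
    obtain i' j' k' where t: "t = (i', j', k')" by (cases t) auto
    show ?thesis unfolding s t Heis_mult Fmod HF ..
  qed
  have Hc: "s \<otimes>\<^bsub>Heis p\<^esub> t \<in> carrier (Heis p)" for s t
  proof -
    obtain i j k where s: "s = (i, j, k)" by (cases s) auto
    obtain i' j' k' where t: "t = (i', j', k')" by (cases t) auto
    show ?thesis unfolding s t Heis_mult Heis_carrier using p0 by simp
  qed
  have F0: "F (0, 0, 0) = \<one>" unfolding F_def by simp
  have Fa: "F (1, 0, 0) = a" unfolding F_def using a by simp
  have Fb: "F (0, 1, 0) = b" unfolding F_def using b by simp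
  have Fcc: "F (0, 0, k) = c [^] k" for k unfolding F_def using c by simp
  have ordc: "ord c = p"
  proof -
    have "ord c dvd p" using pw c pow_eq_id by blast
    moreover have "ord c \<noteq> 1" using ord_eq_1[OF c] c1 by simp
    ultimately show ?thesis using p by (metis prime_nat_iff)
  qed
  have cinj: "i = i'" if "c [^] i = c [^] i'" "i < p" "i' < p" for i i'
  proof -
    have "i \<in> {0..ord c - 1}" "i' \<in> {0..ord c - 1}" using that ordc by auto
    thus ?thesis using inj_onD[OF ord_inj[OF c]] that(1) by blast
  qed
  have Finj: "inj_on F (carrier (Heis p))"
  proof (rule inj_onI)
    fix s t assume s: "s \<in> carrier (Heis p)" and t: "t \<in> carrier (Heis p)" and eq: "F s = F t"
    obtain i j k where s': "s = (i, j, k)" by (cases s) auto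
    obtain i' j' k' where t': "t = (i', j', k')" by (cases t) auto
    have lt: "i < p" "j < p" "k < p" "i' < p" "j' < p" "k' < p" using s t s' t' Heis_carrier by auto
    have q1: "a \<otimes> F (i, j, k) = F (i, j, k) \<otimes> a \<otimes> c [^] j" for i j k
    proof -
      have "a \<otimes> F (i, j, k) = F (1 + i, j, k + j)" using HF[of 1 0 0 i j k] Fa by simp
      also have "\<dots> = F (i, j, k) \<otimes> a \<otimes> c [^] j" using HF[of i j k 1 0 0] HF[of "i+1" j k 0 0 j] Fa Fcc
        by (simp add: add.commute)
      finally show ?thesis .
    qed
    have "F (i, j, k) \<otimes> a \<otimes> c [^] j = F (i', j', k') \<otimes> a \<otimes> c [^] j'"
      using q1[of i j k] q1[of i' j' k'] eq s' t' by simp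
    hence "c [^] j = c [^] j'" using eq s' t' Fc a c by (simp add: m_assoc)
    hence jj: "j = j'" using cinj lt by blast
    have q2: "F (i, 0, k) \<otimes> b = b \<otimes> F (i, 0, k) \<otimes> c [^] i" for i k
    proof -
      have "F (i, 0, k) \<otimes> b = F (i, 1, k + i)" using HF[of i 0 k 0 1 0] Fb by simp
      also have "\<dots> = b \<otimes> F (i, 0, k) \<otimes> c [^] i" using HF[of 0 1 0 i 0 k] HF[of i 1 k 0 0 i] Fb Fcc
        by simp
      finally show ?thesis .
    qed
    have split: "F (i, j, k) = b [^] j \<otimes> F (i, 0, k)" for i j k
      unfolding F_def using a b c by (simp add: m_assoc)
    have e2: "F (i, 0, k) = F (i', 0, k')" using eq s' t' jj split[of i j k] split[of i' j' k'] Fc b by simp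
    hence "b \<otimes> F (i, 0, k) \<otimes> c [^] i = b \<otimes> F (i', 0, k') \<otimes> c [^] i'" using q2 by metis
    hence "c [^] i = c [^] i'" using e2 Fc b c by (simp add: m_assoc)
    hence ii: "i = i'" using cinj lt by blast
    have "a [^] i \<otimes> c [^] k = a [^] i \<otimes> c [^] k'" using e2 ii unfolding F_def using a c by simp
    hence "c [^] k = c [^] k'" using a c by simp
    hence "k = k'" using cinj lt by blast
    thus "s = t" using s' t' ii jj by simp
  qed
  define K where "K = F ` carrier (Heis p)"
  have Kmult: "x \<otimes> y \<in> K" if xy: "x \<in> K" "y \<in> K" for x y
  proof -
    obtain s t where st: "s \<in> carrier (Heis p)" "t \<in> carrier (Heis p)" "x = F s" "y = F t"
      using xy unfolding K_def by blast
    have "x \<otimes> y = F (s \<otimes>\<^bsub>Heis p\<^esub> t)" using st Fhom by simp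
    thus ?thesis unfolding K_def using Hc by blast
  qed
  have "(0, 0, 0) \<in> carrier (Heis p)" using p0 Heis_carrier by simp
  hence K1: "\<one> \<in> K" unfolding K_def using F0 by (metis image_eqI)
  have Kpow: "x [^] (m::nat) \<in> K" if "x \<in> K" for x m
    using that by (induction m) (auto simp: K1 Kmult)
  have KG: "K \<subseteq> carrier G" unfolding K_def using Fc by auto
  have Ksub: "subgroup K G"
  proof (rule subgroupI)
    show "K \<subseteq> carrier G" by (rule KG)
    show "K \<noteq> {}" using K1 by auto
    fix x assume x: "x \<in> K"
    have xc: "x \<in> carrier G" using x KG by auto
    have "x [^] (p - 1) \<otimes> x = \<one>" using xc pw p0 by (simp add: nat_pow_Suc[symmetric])
    hence "inv x = x [^] (p - 1)" using xc by (simp add: inv_equality)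
    thus "inv x \<in> K" using Kpow x by simp
  next
    fix x y assume "x \<in> K" "y \<in> K" thus "x \<otimes> y \<in> K" by (rule Kmult)
  qed
  define \<psi> where "\<psi> = inv_into (carrier (Heis p)) F"
  have bijF: "bij_betw F (carrier (Heis p)) K" unfolding K_def bij_betw_def using Finj by simp
  have bijpsi: "bij_betw \<psi> K (carrier (Heis p))" unfolding \<psi>_def by (rule bij_betw_inv_into[OF bijF])
  have psiF: "\<psi> (F s) = s" if "s \<in> carrier (Heis p)" for s
    unfolding \<psi>_def using Finj that by (simp add: inv_into_f_f)
  have "\<psi> \<in> hom (G\<lparr>carrier := K\<rparr>) (Heis p)"
  proof (rule homI)
    fix x assume "x \<in> carrier (G\<lparr>carrier := K\<rparr>)"
    thus "\<psi> x \<in> carrier (Heis p)" using bijpsi by (auto simp: bij_betw_def)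
  next
    fix x y assume "x \<in> carrier (G\<lparr>carrier := K\<rparr>)" "y \<in> carrier (G\<lparr>carrier := K\<rparr>)"
    then obtain s t where st: "s \<in> carrier (Heis p)" "t \<in> carrier (Heis p)" "x = F s" "y = F t"
      unfolding K_def by (simp add: image_iff) blast
    show "\<psi> (x \<otimes>\<^bsub>G\<lparr>carrier := K\<rparr>\<^esub> y) = \<psi> x \<otimes>\<^bsub>Heis p\<^esub> \<psi> y"
      using st Fhom[of s t] psiF[OF Hc[of s t]] psiF[OF st(1)] psiF[OF st(2)] by simp
  qed
  hence "\<psi> \<in> iso (G\<lparr>carrier := K\<rparr>) (Heis p)" unfolding iso_def using bijpsi by simp
  hence "G\<lparr>carrier := K\<rparr> \<cong> Heis p" by (rule is_isoI)
  thus ?thesis using Ksub by blast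
qed

end




lemma (in group) main_thm:
  assumes "finite (carrier G)"
  shows "PiTilde_iso_C2 G \<longleftrightarrow>
    (\<exists>p::nat. Factorial_Ring.prime p \<and>
       ((cyclic_group G \<and> order G = p)
        \<or> elementary_abelian p G
        \<or> ((\<exists>H. subgroup H G \<and> G\<lparr>carrier := H\<rparr> \<cong> Heis p) \<and> group_exponent G = p)))"
proof -
  have fin: "finite (carrier G)" by fact
  have R: "((cyclic_group G \<and> order G = p)
        \<or> elementary_abelian p G
        \<or> ((\<exists>H. subgroup H G \<and> G\<lparr>carrier := H\<rparr> \<cong> Heis p) \<and> group_exponent G = p))"
    if p: "Factorial_Ring.prime p" and E: "Ep p" for p
  proof (cases "comm_group G")
    case True
    then show ?thesis using Ep_comm_ea[OF fin p E] by blast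
  next
    case False
    then obtain x y where xy: "x \<in> carrier G" "y \<in> carrier G" "x \<otimes> y \<noteq> y \<otimes> x"
      using group_comm_groupI by blast
    obtain n where n: "order G = p ^ n" using Ep_pgroup[OF fin p E] by blast
    obtain a where a: "a \<in> carrier G" "a \<notin> Zc" "\<forall>h\<in>carrier G. h \<otimes> a \<otimes> inv h \<in> Zc #> a"
      using exists_good[OF fin p n xy] by blast
    obtain b c where bc: "b \<in> carrier G" "c \<in> carrier G" "c \<noteq> \<one>"
      "\<forall>g\<in>carrier G. c \<otimes> g = g \<otimes> c" "a \<otimes> b = b \<otimes> a \<otimes> c"
      using good_to_abc[OF a] by blast
    have ordp: "\<And>x. x \<in> carrier G \<Longrightarrow> x \<noteq> \<one> \<Longrightarrow> ord x = p"
      using E by (auto simp: Ep_def)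
    have pw: "\<forall>x\<in>carrier G. x [^] p = \<one>"
    proof
      fix x assume x: "x \<in> carrier G"
      show "x [^] p = \<one>" using ordp[OF x] x by (cases "x = \<one>") auto
    qed
    have "\<exists>H. subgroup H G \<and> G\<lparr>carrier := H\<rparr> \<cong> Heis p"
      using heis_sub[OF p pw a(1) bc(1) bc(2) bc(3) bc(4) bc(5)] .
    then show ?thesis using Ep_exponent[OF p E] by blast
  qed
  show ?thesis
  proof
    assume "PiTilde_iso_C2 G"
    then obtain p where "Factorial_Ring.prime p" "Ep p" using iso_C2_imp[OF fin] by blast
    thus "\<exists>p. Factorial_Ring.prime p \<and> ((cyclic_group G \<and> order G = p)
        \<or> elementary_abelian p G
        \<or> ((\<exists>H. subgroup H G \<and> G\<lparr>carrier := H\<rparr> \<cong> Heis p) \<and> group_exponent G = p))"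
      using R by blast
  next
    assume "\<exists>p. Factorial_Ring.prime p \<and> ((cyclic_group G \<and> order G = p)
        \<or> elementary_abelian p G
        \<or> ((\<exists>H. subgroup H G \<and> G\<lparr>carrier := H\<rparr> \<cong> Heis p) \<and> group_exponent G = p))"
    then obtain p where p: "Factorial_Ring.prime p" and r: "((cyclic_group G \<and> order G = p)
        \<or> elementary_abelian p G
        \<or> ((\<exists>H. subgroup H G \<and> G\<lparr>carrier := H\<rparr> \<cong> Heis p) \<and> group_exponent G = p))" by blast
    show "PiTilde_iso_C2 G" using Ep_imp_iso_C2[OF p rhs_imp_Ep[OF fin p r]] .
  qed
qed

theorem theorem2p2:
  fixes G :: "('a, 'b) monoid_scheme"
  assumes "group G" and "finite (carrier G)"
  shows "PiTilde_iso_C2 G \<longleftrightarrow>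
    (\<exists>p::nat. Factorial_Ring.prime p \<and>
       ((cyclic_group G \<and> order G = p)
        \<or> elementary_abelian p G
        \<or> ((\<exists>H. subgroup H G \<and> G\<lparr>carrier := H\<rparr> \<cong> Heis p) \<and> group_exponent G = p)))"
  using group.main_thm[OF assms] .



end
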